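(* Let $m,n\ge2$. If $f\in\operatorname{vert}(\Diamond_m,\Diamond_n)$ and $f(0)$ lies in the interior of $\Diamond_n$, then $f(0)=0$.
   Context: For convex polytopes $P,Q$, $\operatorname{Hom}(P,Q)$ is the set of maps $P\to Q$ that are restrictions of affine maps $\operatorname{Aff}(P)\to\operatorname{Aff}(Q)$; it is a convex polytope in the affine space of affine maps $\operatorname{Aff}(P)\to\operatorname{Aff}(Q)$, and $\operatorname{vert}(P,Q)$ denotes its set of vertices. $\Diamond_n=\operatorname{conv}(\pm e_1,\ldots,\pm e_n)\subset\mathbb{R}^n$ is the $n$-dimensional crosspolytope. *)

theory Defs
  imports "HOL-Analysis.Analysis"
begin

definition crosspolytope :: "(real^'n) set" where
  "crosspolytope = convex hull {x. \<exists>i. x = axis i 1 \<or> x = - axis i 1}"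

text \<open>An affine map R^m -> R^n is represented by the pair (A, b), meaning x |-> A *v x + b.
  This is a linear isomorphism between the space of affine maps and (real^'m^'n) * real^'n.\<close>
definition Hom :: "(real^'m) set \<Rightarrow> (real^'n) set \<Rightarrow> ((real^'m^'n) \<times> (real^'n)) set" where
  "Hom P Q = {(A, b). \<forall>x\<in>P. A *v x + b \<in> Q}"

definition vert :: "(real^'m) set \<Rightarrow> (real^'n) set \<Rightarrow> ((real^'m^'n) \<times> (real^'n)) set" where
  "vert P Q = {f. f extreme_point_of Hom P Q}"

end

theory Submission
  imports Defs
begin

definition l1 :: "real^'n \<Rightarrow> real" where "l1 x = (\<Sum>j\<in>UNIV. \<bar>x$j\<bar>)"

lemma l1_nonneg: "0 \<le> l1 x"
  unfolding l1_def by (simp add: sum_nonneg)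

lemma l1_axis_add: "l1 (x + c *\<^sub>R axis k 1) = l1 x - \<bar>x$k\<bar> + \<bar>x$k + c\<bar>"
proof -
  have "l1 (x + c *\<^sub>R axis k 1) = \<bar>x$k + c\<bar> + (\<Sum>j\<in>UNIV-{k}. \<bar>(x + c *\<^sub>R axis k 1)$j\<bar>)"
    unfolding l1_def by (subst sum.remove[of UNIV k]) (auto simp: axis_def)
  also have "(\<Sum>j\<in>UNIV-{k}. \<bar>(x + c *\<^sub>R axis k 1)$j\<bar>) = (\<Sum>j\<in>UNIV-{k}. \<bar>x$j\<bar>)"
    by (rule sum.cong) (auto simp: axis_def)
  also have "l1 x = \<bar>x$k\<bar> + (\<Sum>j\<in>UNIV-{k}. \<bar>x$j\<bar>)"
    unfolding l1_def by (subst sum.remove[of UNIV k]) auto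
  ultimately show ?thesis by simp
qed

lemma l1_scale: "l1 (c *\<^sub>R x) = \<bar>c\<bar> * l1 x"
  unfolding l1_def by (simp add: sum_distrib_left abs_mult)

lemma l1_tri: "l1 (x + y) \<le> l1 x + l1 y"
  unfolding l1_def sum.distrib[symmetric] by (rule sum_mono) (simp add: abs_triangle_ineq)

lemma l1_axis: "l1 (c *\<^sub>R axis k 1) = \<bar>c\<bar>"
  using l1_axis_add[of 0 c k] by (simp add: l1_def)

lemma convex_l1: "convex {x. l1 x \<le> 1}"
proof (rule convexI)
  fix x y :: "real^'n" and u v :: real
  assume "x \<in> {x. l1 x \<le> 1}" "y \<in> {x. l1 x \<le> 1}" "0 \<le> u" "0 \<le> v" "u + v = 1"
  moreover have "l1 (u *\<^sub>R x + v *\<^sub>R y) \<le> u * l1 x + v * l1 y"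
    using l1_tri[of "u *\<^sub>R x" "v *\<^sub>R y"] \<open>0\<le>u\<close> \<open>0\<le>v\<close> by (simp add: l1_scale)
  ultimately have "l1 (u *\<^sub>R x + v *\<^sub>R y) \<le> u * 1 + v * 1"
  proof -
    have "u * l1 x \<le> u * 1" using \<open>x \<in> _\<close> \<open>0\<le>u\<close> by (intro mult_left_mono) auto
    moreover have "v * l1 y \<le> v * 1" using \<open>y \<in> _\<close> \<open>0\<le>v\<close> by (intro mult_left_mono) auto
    ultimately show ?thesis using \<open>l1 (u *\<^sub>R x + v *\<^sub>R y) \<le> _\<close> by linarith
  qed
  then show "u *\<^sub>R x + v *\<^sub>R y \<in> {x. l1 x \<le> 1}" using \<open>u+v=1\<close> by simp
qed

lemma cp_eq: "(crosspolytope :: (real^'n) set) = {x. l1 x \<le> 1}"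
proof
  show "crosspolytope \<subseteq> {x::real^'n. l1 x \<le> 1}"
    unfolding crosspolytope_def
  proof (rule hull_minimal)
    show "convex {x::real^'n. l1 x \<le> 1}" by (rule convex_l1)
    show "{x::real^'n. \<exists>i. x = axis i 1 \<or> x = - axis i 1} \<subseteq> {x. l1 x \<le> 1}"
    proof
      fix x :: "real^'n" assume "x \<in> {x. \<exists>i. x = axis i 1 \<or> x = - axis i 1}"
      then obtain i where "x = axis i 1 \<or> x = - axis i 1" by auto
      then show "x \<in> {x. l1 x \<le> 1}"
        using l1_axis[of 1 i] l1_axis[of "-1" i] by auto
    qed
  qed
next
  let ?V = "{x::real^'n. \<exists>i. x = axis i 1 \<or> x = - axis i 1}"
  have cvx: "convex (convex hull ?V)" by simp
  have V: "?V \<subseteq> convex hull ?V" by (rule hull_subset)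
  obtain i0 :: 'n where True by simp
  have "(1/2) *\<^sub>R axis i0 1 + (1/2) *\<^sub>R (- axis i0 (1::real)) \<in> convex hull ?V"
    by (rule convexD[OF cvx]) (use V in auto)
  then have zero: "0 \<in> convex hull ?V" by simp
  show "{x::real^'n. l1 x \<le> 1} \<subseteq> crosspolytope"
  proof
    fix y :: "real^'n" assume "y \<in> {x. l1 x \<le> 1}"
    then have y1: "l1 y \<le> 1" by simp
    define z where "z j = (if y$j \<ge> 0 then axis j 1 else - axis j (1::real))" for j
    have zV: "z j \<in> convex hull ?V" for j using V unfolding z_def by auto
    have yz: "y = (\<Sum>j\<in>UNIV. \<bar>y$j\<bar> *\<^sub>R z j)"
    proof (subst vec_eq_iff, intro allI)
      fix k
      have "(\<Sum>j\<in>UNIV. \<bar>y$j\<bar> *\<^sub>R z j) $ k = (\<Sum>j\<in>UNIV. (\<bar>y$j\<bar> *\<^sub>R z j) $ k)"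
        by (rule sum_component)
      also have "\<dots> = (\<Sum>j\<in>UNIV. if j = k then y$k else 0)"
        by (rule sum.cong) (auto simp: z_def axis_def)
      finally show "y $ k = (\<Sum>j\<in>UNIV. \<bar>y$j\<bar> *\<^sub>R z j) $ k" by simp
    qed
    show "y \<in> crosspolytope"
    proof (cases "l1 y = 0")
      case True
      then have "\<forall>j\<in>UNIV. \<bar>y$j\<bar> = 0" unfolding l1_def
        by (subst sum_nonneg_eq_0_iff[symmetric]) auto
      then have "y = 0" by (simp add: vec_eq_iff)
      then show ?thesis using zero by (simp add: crosspolytope_def)
    next
      case False
      let ?s = "l1 y"
      have spos: "?s > 0" using False l1_nonneg[of y] by simp
      have "(\<Sum>j\<in>UNIV. (\<bar>y$j\<bar> / ?s) *\<^sub>R z j) \<in> convex hull ?V"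
      proof (rule convex_sum[OF _ cvx])
        show "(\<Sum>j\<in>UNIV. \<bar>y$j\<bar> / ?s) = 1"
          using spos by (simp add: sum_divide_distrib[symmetric] l1_def)
      qed (use zV spos in auto)
      moreover have "(\<Sum>j\<in>UNIV. (\<bar>y$j\<bar> / ?s) *\<^sub>R z j) = (1/?s) *\<^sub>R y"
        by (subst yz) (simp add: scaleR_sum_right divide_inverse_commute)
      ultimately have w: "(1/?s) *\<^sub>R y \<in> convex hull ?V" by simp
      have "?s *\<^sub>R ((1/?s) *\<^sub>R y) + (1 - ?s) *\<^sub>R 0 \<in> convex hull ?V"
        by (rule convexD[OF cvx w zero]) (use spos y1 in auto)
      then show ?thesis using spos by (simp add: crosspolytope_def)
    qed
  qed
qed


lemma l1_face:
  fixes w :: "real^'n"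
  assumes w1: "l1 w = 1" and wj: "w$j \<noteq> 0" and sg: "\<sigma> = sgn (w$j)"
    and t1: "\<bar>t\<bar> \<le> 1/2" and t2: "\<bar>t\<bar> \<le> \<bar>w$j\<bar>"
  shows "l1 ((1+t) *\<^sub>R w + (-t * \<sigma>) *\<^sub>R axis j 1) = 1"
proof -
  have tp: "\<bar>1+t\<bar> = 1+t" using t1 by simp
  have e: "l1 ((1+t) *\<^sub>R w + (-t * \<sigma>) *\<^sub>R axis j 1)
      = (1+t) - \<bar>(1+t) * w$j\<bar> + \<bar>(1+t) * w$j - t * \<sigma>\<bar>"
    using l1_axis_add[of "(1+t) *\<^sub>R w" "-t * \<sigma>" j] tp w1 by (simp add: l1_scale)
  show ?thesis
  proof (cases "w$j > 0")
    case True
    then have "\<sigma> = 1" using sg by simp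
    moreover have "(1+t) * w$j \<ge> t"
    proof (cases "t \<le> 0")
      case True
      have "(1+t) * w$j \<ge> 0" using t1 \<open>w$j>0\<close> by (intro mult_nonneg_nonneg) auto
      then show ?thesis using True by linarith
    next
      case False
      then have "(1+t) * w$j \<ge> w$j" using \<open>w$j>0\<close> by simp
      then show ?thesis using t2 False True by linarith
    qed
    ultimately have h: "\<bar>(1+t) * w$j - t * \<sigma>\<bar> = (1+t) * w$j - t" by simp
    have "\<bar>(1+t) * w$j\<bar> = (1+t) * w$j" using True t1 by (simp add: abs_mult)
    then show ?thesis using e h by linarith
  next
    case False
    then have wn: "w$j < 0" using wj by simp
    then have "\<sigma> = -1" using sg by simp
    moreover have "(1+t) * (- w$j) \<ge> t"
    proof (cases "t \<le> 0")
      case True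
      have "(1+t) * (-w$j) \<ge> 0" using t1 wn by (intro mult_nonneg_nonneg) auto
      then show ?thesis using True by linarith
    next
      case False
      then have "(1+t) * (-w$j) \<ge> -w$j" using wn by simp
      then show ?thesis using t2 False wn by linarith
    qed
    ultimately have h: "\<bar>(1+t) * w$j - t * \<sigma>\<bar> = (1+t) * (-w$j) - t" by simp
    have "\<bar>(1+t) * w$j\<bar> = (1+t) * (-w$j)" using wn t1 by (simp add: abs_mult)
    then show ?thesis using e h by linarith
  qed
qed

lemma key:
  fixes p q :: "real^'n"
  assumes p1: "l1 p \<le> 1" and q1: "l1 q \<le> 1" and pq: "l1 (p + q) < 2"
  shows "\<exists>u e. e > 0 \<and> (\<forall>t. \<bar>t\<bar> \<le> e \<longrightarrow> l1 (p + t *\<^sub>R u) \<le> 1 \<and> l1 (q + t *\<^sub>R (p + q - u)) \<le> 1)"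
proof (cases "l1 p < 1")
  case True
  define e where "e = (1 - l1 p) / (l1 (p+q) + 1)"
  have L: "l1 (p+q) \<ge> 0" by (rule l1_nonneg)
  have epos: "e > 0" using True L by (simp add: e_def)
  have eL: "e * l1 (p+q) \<le> 1 - l1 p"
  proof -
    have "e * l1 (p+q) \<le> e * (l1 (p+q) + 1)" using epos by simp
    also have "\<dots> = 1 - l1 p" using L by (simp add: e_def)
    finally show ?thesis .
  qed
  show ?thesis
  proof (intro exI conjI allI impI)
    fix t :: real assume t: "\<bar>t\<bar> \<le> e"
    have "l1 (p + t *\<^sub>R (p+q)) \<le> l1 p + \<bar>t\<bar> * l1 (p+q)"
      using l1_tri[of p "t *\<^sub>R (p+q)"] by (simp add: l1_scale)
    also have "\<bar>t\<bar> * l1 (p+q) \<le> e * l1 (p+q)" using t L by (intro mult_right_mono) auto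
    finally show "l1 (p + t *\<^sub>R (p+q)) \<le> 1" using eL by linarith
    show "l1 (q + t *\<^sub>R (p + q - (p+q))) \<le> 1" using q1 by simp
  qed (rule epos)
next
  case pF: False
  show ?thesis
  proof (cases "l1 q < 1")
    case True
    define e where "e = (1 - l1 q) / (l1 (p+q) + 1)"
    have L: "l1 (p+q) \<ge> 0" by (rule l1_nonneg)
    have epos: "e > 0" using True L by (simp add: e_def)
    have eL: "e * l1 (p+q) \<le> 1 - l1 q"
    proof -
      have "e * l1 (p+q) \<le> e * (l1 (p+q) + 1)" using epos by simp
      also have "\<dots> = 1 - l1 q" using L by (simp add: e_def)
      finally show ?thesis .
    qed
    show ?thesis
    proof (intro exI conjI allI impI)
      fix t :: real assume t: "\<bar>t\<bar> \<le> e"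
      have "l1 (q + t *\<^sub>R (p+q)) \<le> l1 q + \<bar>t\<bar> * l1 (p+q)"
        using l1_tri[of q "t *\<^sub>R (p+q)"] by (simp add: l1_scale)
      also have "\<bar>t\<bar> * l1 (p+q) \<le> e * l1 (p+q)" using t L by (intro mult_right_mono) auto
      finally show "l1 (q + t *\<^sub>R (p + q - 0)) \<le> 1" using eL by simp
      show "l1 (p + t *\<^sub>R 0) \<le> 1" using p1 by simp
    qed (rule epos)
  next
    case qF: False
    have P1: "l1 p = 1" and Q1: "l1 q = 1" using pF qF p1 q1 by auto
    obtain j where j: "p$j * q$j < 0"
    proof (rule ccontr)
      assume "\<not> thesis"
      then have nn: "\<forall>j. p$j * q$j \<ge> 0" using that by (meson not_le)
      have "l1 (p+q) = (\<Sum>j\<in>UNIV. \<bar>p$j\<bar> + \<bar>q$j\<bar>)"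
        unfolding l1_def
      proof (rule sum.cong)
        fix j :: 'n
        have "p$j * q$j \<ge> 0" using nn by simp
        then show "\<bar>(p+q)$j\<bar> = \<bar>p$j\<bar> + \<bar>q$j\<bar>"
          by (auto simp: zero_le_mult_iff abs_if)
      qed simp
      also have "\<dots> = 2" using P1 Q1 by (simp add: sum.distrib l1_def)
      finally show False using pq by simp
    qed
    define sg where "sg = sgn (p$j)"
    have pj: "p$j \<noteq> 0" and qj: "q$j \<noteq> 0" using j by auto
    have sq: "sgn (q$j) = - sg" using j unfolding sg_def
      by (cases "p$j > 0") (auto simp: mult_less_0_iff)
    define e where "e = min (1/2) (min \<bar>p$j\<bar> \<bar>q$j\<bar>)"
    have epos: "e > 0" using pj qj by (simp add: e_def)
    show ?thesis
    proof (intro exI conjI allI impI)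
      fix t :: real assume t: "\<bar>t\<bar> \<le> e"
      have "p + t *\<^sub>R (p - sg *\<^sub>R axis j 1) = (1+t) *\<^sub>R p + (-t * sg) *\<^sub>R axis j 1"
        by (simp add: algebra_simps)
      moreover have "l1 ((1+t) *\<^sub>R p + (-t * sg) *\<^sub>R axis j 1) = 1"
        by (rule l1_face[OF P1 pj sg_def]) (use t in \<open>auto simp: e_def\<close>)
      ultimately show "l1 (p + t *\<^sub>R (p - sg *\<^sub>R axis j 1)) \<le> 1" by simp
      have "q + t *\<^sub>R (p + q - (p - sg *\<^sub>R axis j 1)) = (1+t) *\<^sub>R q + (-t * (-sg)) *\<^sub>R axis j 1"
        by (simp add: algebra_simps)
      moreover have "l1 ((1+t) *\<^sub>R q + (-t * (-sg)) *\<^sub>R axis j 1) = 1"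
        by (rule l1_face[OF Q1 qj sq[symmetric]]) (use t in \<open>auto simp: e_def\<close>)
      ultimately show "l1 (q + t *\<^sub>R (p + q - (p - sg *\<^sub>R axis j 1))) \<le> 1" by simp
    qed (rule epos)
  qed
qed

lemma interior_l1:
  fixes b :: "real^'n"
  assumes "b \<in> interior crosspolytope"
  shows "l1 b < 1"
proof -
  obtain e where e: "e > 0" "ball b e \<subseteq> crosspolytope" using assms mem_interior by blast
  obtain k :: 'n where True by simp
  define \<sigma> where "\<sigma> = (if b$k \<ge> 0 then 1 else (-1::real))"
  define y where "y = b + (\<sigma>*e/2) *\<^sub>R axis k 1"
  have "dist b y = e/2" using e unfolding y_def dist_norm \<sigma>_def by simp
  then have "y \<in> crosspolytope" using e by auto
  then have "l1 y \<le> 1" by (simp add: cp_eq)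
  moreover have "l1 y = l1 b + e/2" unfolding y_def l1_axis_add
    using e by (simp add: \<sigma>_def abs_if)
  ultimately show ?thesis using e by simp
qed


lemma mv_neg: "(M::real^'m^'n) *v (- x) = - (M *v x)"
  by (metis diff_0 matrix_vector_mult_0_right matrix_vector_mult_diff_distrib)

lemma hom_crit:
  fixes M :: "real^'m^'n" and c :: "real^'n"
  assumes "\<And>k. l1 (M *v axis k 1 + c) \<le> 1" and "\<And>k. l1 (c - M *v axis k 1) \<le> 1"
  shows "(M, c) \<in> Hom crosspolytope crosspolytope"
proof -
  let ?S = "{x::real^'m. M *v x + c \<in> crosspolytope}"
  have cvx: "convex ?S"
  proof (rule convexI)
    fix x y :: "real^'m" and u v :: real
    assume "x \<in> ?S" "y \<in> ?S" "0 \<le> u" "0 \<le> v" "u + v = 1"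
    then have "u *\<^sub>R (M *v x + c) + v *\<^sub>R (M *v y + c) \<in> crosspolytope"
      unfolding crosspolytope_def by (intro convexD) auto
    moreover have "u *\<^sub>R (M *v x + c) + v *\<^sub>R (M *v y + c) = M *v (u *\<^sub>R x + v *\<^sub>R y) + c"
    proof -
      have "u *\<^sub>R (M *v x + c) + v *\<^sub>R (M *v y + c) = M *v (u *\<^sub>R x + v *\<^sub>R y) + (u + v) *\<^sub>R c"
        by (simp add: algebra_simps)
      then show ?thesis using \<open>u+v=1\<close> by simp
    qed
    ultimately show "u *\<^sub>R x + v *\<^sub>R y \<in> ?S" by simp
  qed
  have "crosspolytope \<subseteq> ?S"
    unfolding crosspolytope_def[where 'n='m]
  proof (rule hull_minimal)
    show "convex ?S" by (rule cvx)
    show "{x::real^'m. \<exists>i. x = axis i 1 \<or> x = - axis i 1} \<subseteq> ?S"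
    proof
      fix x :: "real^'m" assume "x \<in> {x. \<exists>i. x = axis i 1 \<or> x = - axis i 1}"
      then obtain i where "x = axis i 1 \<or> x = - axis i 1" by auto
      then show "x \<in> ?S" using assms[of i] by (auto simp: cp_eq mv_neg)
    qed
  qed
  then show ?thesis unfolding Hom_def by auto
qed

theorem theorem6p1:
  fixes A :: "real^'m^'n" and b :: "real^'n"
  assumes "CARD('m) \<ge> 2" and "CARD('n) \<ge> 2"
    and "(A, b) \<in> vert (crosspolytope :: (real^'m) set) (crosspolytope :: (real^'n) set)"
    and "A *v 0 + b \<in> interior (crosspolytope :: (real^'n) set)"
  shows "A *v 0 + b = 0"
proof (rule ccontr)
  assume "A *v 0 + b \<noteq> 0"
  then have b0: "b \<noteq> 0" by simp
  have ext: "(A, b) extreme_point_of Hom (crosspolytope :: (real^'m) set) (crosspolytope :: (real^'n) set)"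
    using assms(3) by (simp add: vert_def)
  then have H: "(A, b) \<in> Hom (crosspolytope :: (real^'m) set) (crosspolytope :: (real^'n) set)"
    by (simp add: extreme_point_of_def)
  have bl: "l1 b < 1" using assms(4) interior_l1 by simp
  define P where "P k = A *v axis k 1 + b" for k :: 'm
  define Q where "Q k = b - A *v axis k 1" for k :: 'm
  have ax: "axis k 1 \<in> (crosspolytope :: (real^'m) set)" "- axis k 1 \<in> (crosspolytope :: (real^'m) set)" for k
    unfolding crosspolytope_def by (auto intro!: hull_inc)
  have P1: "l1 (P k) \<le> 1" for k
    using H ax(1)[of k] unfolding Hom_def P_def by (auto simp: cp_eq)
  have Q1: "l1 (Q k) \<le> 1" for k
    using H ax(2)[of k] unfolding Hom_def Q_def by (auto simp: cp_eq mv_neg)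
  have PQ: "P k + Q k = 2 *\<^sub>R b" for k unfolding P_def Q_def by (simp add: scaleR_2)
  have PQ2: "l1 (P k + Q k) < 2" for k using bl unfolding PQ l1_scale by simp
  have "\<forall>k. \<exists>u e. e > 0 \<and> (\<forall>t. \<bar>t\<bar> \<le> e \<longrightarrow> l1 (P k + t *\<^sub>R u) \<le> 1 \<and> l1 (Q k + t *\<^sub>R (P k + Q k - u)) \<le> 1)"
    using key[OF P1 Q1 PQ2] by blast
  then obtain U E where UE: "\<And>k. E k > 0 \<and> (\<forall>t. \<bar>t\<bar> \<le> E k \<longrightarrow> l1 (P k + t *\<^sub>R U k) \<le> 1 \<and> l1 (Q k + t *\<^sub>R (P k + Q k - U k)) \<le> 1)"
    by metis
  define e0 where "e0 = Min (range E)"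
  have e0pos: "e0 > 0" unfolding e0_def using UE by (subst Min_gr_iff) auto
  have e0le: "e0 \<le> E k" for k unfolding e0_def by (rule Min_le) auto
  define D :: "real^'m^'n" where "D = (\<chi> i k. (U k - b)$i)"
  have Dax: "D *v axis k 1 = U k - b" for k
    by (simp add: matrix_vector_mult_basis column_def D_def vec_eq_iff)
  define fp where "fp t = (A + t *\<^sub>R D, b + t *\<^sub>R b)" for t :: real
  have fpH: "fp t \<in> Hom (crosspolytope :: (real^'m) set) (crosspolytope :: (real^'n) set)" if t: "\<bar>t\<bar> \<le> e0" for t
    unfolding fp_def
  proof (rule hom_crit)
    fix k
    have tE: "\<bar>t\<bar> \<le> E k" using t e0le[of k] by linarith
    have "(A + t *\<^sub>R D) *v axis k 1 + (b + t *\<^sub>R b) = P k + t *\<^sub>R U k"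
      unfolding P_def matrix_vector_mult_add_rdistrib scaleR_matrix_vector_assoc[symmetric] Dax
      by (simp add: algebra_simps)
    then show "l1 ((A + t *\<^sub>R D) *v axis k 1 + (b + t *\<^sub>R b)) \<le> 1" using UE[of k] tE by simp
    have "b + t *\<^sub>R b - (A + t *\<^sub>R D) *v axis k 1 = Q k + t *\<^sub>R (P k + Q k - U k)"
      unfolding PQ unfolding Q_def matrix_vector_mult_add_rdistrib scaleR_matrix_vector_assoc[symmetric] Dax
      by (simp add: algebra_simps scaleR_2)
    then show "l1 (b + t *\<^sub>R b - (A + t *\<^sub>R D) *v axis k 1) \<le> 1" using UE[of k] tE by simp
  qed
  have mid: "midpoint (fp e0) (fp (-e0)) = (A, b)"
  proof -
    have "A + e0 *\<^sub>R D + (A + (-e0) *\<^sub>R D) = 2 *\<^sub>R A" by (simp add: scaleR_2)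
    moreover have "b + e0 *\<^sub>R b + (b + (-e0) *\<^sub>R b) = 2 *\<^sub>R b" by (simp add: scaleR_2)
    ultimately show ?thesis unfolding fp_def midpoint_def by simp
  qed
  have ne: "fp e0 \<noteq> fp (-e0)"
  proof
    assume "fp e0 = fp (-e0)"
    then have "b + e0 *\<^sub>R b = b + (-e0) *\<^sub>R b" unfolding fp_def by simp
    then have "e0 *\<^sub>R b = (-e0) *\<^sub>R b" by simp
    then have "e0 = -e0" using b0 scaleR_cancel_right by blast
    then show False using e0pos by simp
  qed
  have "(A, b) \<in> open_segment (fp e0) (fp (-e0))"
    using ne mid midpoint_in_open_segment by metis
  moreover have "fp e0 \<in> Hom crosspolytope crosspolytope" "fp (-e0) \<in> Hom crosspolytope crosspolytope"
    using fpH e0pos by auto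
  ultimately show False using ext unfolding extreme_point_of_def by blast
qed

end
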